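(* Let $|\Psi\rangle$ be any pure single-qubit non-stabilizer state whose density matrix lies in the set $P_Y$. Then any $\omega$-witness $|\omega\rangle$ achieving $|\langle\Psi|\omega\rangle|^2=\xi(\Psi)$ satisfies $$|\omega\rangle\langle\omega|=\frac{I+qH+\sqrt{1-q^2}\,Y}{1+q/\sqrt2},\qquad H=(X+Z)/\sqrt2,$$ for some $q$ with $\sqrt{2/3}\le q\le1$. Furthermore, if $|\Psi\rangle\langle\Psi|$ is in $P_Y\cap P_X$ or in $P_Y\cap P_Z$, then $q=\sqrt{2/3}$, i.e. $$|\omega\rangle\langle\omega|=\frac{I+(X+Y+Z)/\sqrt3}{1+1/\sqrt3}.$$
   Context: $X,Y,Z$ are the Pauli matrices; the single-qubit pure stabilizer states are $|0\rangle,|1\rangle,|\pm\rangle,|\pm_i\rangle$. An $\omega$-witness is a vector $|\omega\rangle\in\mathbb C^2$ with $|\langle\omega|\phi\rangle|\le1$ for all pure single-qubit stabilizer states $|\phi\rangle$; $\xi(\Psi)=\min\{\|c\|_1^2:|\Psi\rangle=\sum_jc_j|\phi_j\rangle,\ |\phi_j\rangle\text{ stabilizer}\}$. Writing $\langle M\rangle=\mathrm{Tr}[\rho M]$: the positive octant is $P=\{\rho:\langle X\rangle,\langle Y\rangle,\langle Z\rangle\ge0\}$, and $P_X=\{\rho\in P:\langle X\rangle\le\langle Y\rangle,\ \langle X\rangle\le\langle Z\rangle\}$, $P_Y=\{\rho\in P:\langle Y\rangle\le\langle X\rangle,\ \langle Y\rangle\le\langle Z\rangle\}$, $P_Z=\{\rho\in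 P:\langle Z\rangle\le\langle X\rangle,\ \langle Z\rangle\le\langle Y\rangle\}$. *)

theory Defs
  imports "HOL-Analysis.Analysis"
begin

type_synonym qvec = "complex ^ 2"
type_synonym qmat = "complex ^ 2 ^ 2"

definition mat2 :: "complex \<Rightarrow> complex \<Rightarrow> complex \<Rightarrow> complex \<Rightarrow> qmat" where
  "mat2 a b c d = vector [vector [a, b], vector [c, d]]"

definition ket :: "complex \<Rightarrow> complex \<Rightarrow> qvec" where
  "ket a b = vector [a, b]"

definition PauliI :: qmat where "PauliI = mat2 1 0 0 1"
definition PauliX :: qmat where "PauliX = mat2 0 1 1 0"
definition PauliY :: qmat where "PauliY = mat2 0 (-\<i>) \<i> 0"
definition PauliZ :: qmat where "PauliZ = mat2 1 0 0 (-1)"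

definition braket :: "qvec \<Rightarrow> qvec \<Rightarrow> complex" where
  "braket a b = (\<Sum>i\<in>UNIV. cnj (a $ i) * b $ i)"

definition outer :: "qvec \<Rightarrow> qvec \<Rightarrow> qmat" where
  "outer a b = (\<chi> i j. a $ i * cnj (b $ j))"

definition stab_reps :: "qvec set" where
  "stab_reps = {ket 1 0, ket 0 1,
                ket (1 / sqrt 2) (1 / sqrt 2), ket (1 / sqrt 2) (- 1 / sqrt 2),
                ket (1 / sqrt 2) (\<i> / sqrt 2), ket (1 / sqrt 2) (- \<i> / sqrt 2)}"

definition stab_states :: "qvec set" where
  "stab_states = {c *s s | c s. cmod c = 1 \<and> s \<in> stab_reps}"

definition omega_witness :: "qvec \<Rightarrow> bool" where
  "omega_witness w \<longleftrightarrow> (\<forall>\<phi>\<in>stab_states. cmod (braket w \<phi>) \<le> 1)"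

definition xi :: "qvec \<Rightarrow> real" where
  "xi \<Psi> = Inf {(\<Sum>j<n. cmod (c j))\<^sup>2 | (n::nat) (c::nat \<Rightarrow> complex) (\<phi>::nat \<Rightarrow> qvec).
                 (\<forall>j<n. \<phi> j \<in> stab_states) \<and> \<Psi> = (\<Sum>j<n. c j *s \<phi> j)}"

text \<open>Expectation value <M> = Tr[rho M] (real part; real for Hermitian rho, M).\<close>
definition expect :: "qmat \<Rightarrow> qmat \<Rightarrow> real" where
  "expect \<rho> M = Re (trace (\<rho> ** M))"

definition in_P :: "qmat \<Rightarrow> bool" where
  "in_P \<rho> \<longleftrightarrow> expect \<rho> PauliX \<ge> 0 \<and> expect \<rho> PauliY \<ge> 0 \<and> expect \<rho> PauliZ \<ge> 0"

definition in_PX :: "qmat \<Rightarrow> bool" where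
  "in_PX \<rho> \<longleftrightarrow> in_P \<rho> \<and> expect \<rho> PauliX \<le> expect \<rho> PauliY \<and> expect \<rho> PauliX \<le> expect \<rho> PauliZ"
definition in_PY :: "qmat \<Rightarrow> bool" where
  "in_PY \<rho> \<longleftrightarrow> in_P \<rho> \<and> expect \<rho> PauliY \<le> expect \<rho> PauliX \<and> expect \<rho> PauliY \<le> expect \<rho> PauliZ"
definition in_PZ :: "qmat \<Rightarrow> bool" where
  "in_PZ \<rho> \<longleftrightarrow> in_P \<rho> \<and> expect \<rho> PauliZ \<le> expect \<rho> PauliX \<and> expect \<rho> PauliZ \<le> expect \<rho> PauliY"

end

theory Submission
  imports Defs
begin

lemma qvec_ket: "w = ket (w$1) (w$2)"
  by (simp add: ket_def vec_eq_iff forall_2)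

lemma braket_ket: "braket (ket u v) (ket a b) = cnj u * a + cnj v * b"
  by (simp add: braket_def ket_def sum_2)

lemma braket_cnj: "braket a b = cnj (braket b a)"
  by (simp add: braket_def mult.commute)

lemma braket_scale: "braket w (c *s x) = c * braket w x"
  by (simp add: braket_def sum_distrib_left mult_ac)

lemma braket_sum: "finite A \<Longrightarrow> braket w (sum f A) = (\<Sum>j\<in>A. braket w (f j))"
  unfolding braket_def by (simp add: sum_distrib_left, rule sum.swap)

lemma outer_ket: "outer (ket u v) (ket u v) = mat2 (u * cnj u) (u * cnj v) (v * cnj u) (v * cnj v)"
  by (simp add: outer_def mat2_def ket_def vec_eq_iff forall_2)

lemma mat2_eq_iff: "mat2 a b c d = mat2 a' b' c' d' \<longleftrightarrow> a = a' \<and> b = b' \<and> c = c' \<and> d = d'"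
  by (simp add: mat2_def vec_eq_iff forall_2)

lemma mat2_add: "mat2 a b c d + mat2 a' b' c' d' = mat2 (a+a') (b+b') (c+c') (d+d')"
  by (simp add: mat2_def vec_eq_iff forall_2)

lemma mat2_scaleR: "r *\<^sub>R mat2 a b c d = mat2 (r*\<^sub>R a) (r*\<^sub>R b) (r*\<^sub>R c) (r*\<^sub>R d)"
  by (simp add: mat2_def vec_eq_iff forall_2)

lemma mat2_mult: "mat2 a b c d ** mat2 a' b' c' d' = mat2 (a*a'+b*c') (a*b'+b*d') (c*a'+d*c') (c*b'+d*d')"
  by (simp add: mat2_def vec_eq_iff forall_2 matrix_matrix_mult_def sum_2)

lemma trace_mat2: "trace (mat2 a b c d) = a + d"
  by (simp add: mat2_def trace_def sum_2)

definition bln :: "complex \<Rightarrow> complex \<Rightarrow> real" where "bln u v = (cmod u)\<^sup>2 + (cmod v)\<^sup>2"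
definition blx :: "complex \<Rightarrow> complex \<Rightarrow> real" where "blx u v = 2 * Re (u * cnj v)"
definition bly :: "complex \<Rightarrow> complex \<Rightarrow> real" where "bly u v = 2 * Im (cnj u * v)"
definition blz :: "complex \<Rightarrow> complex \<Rightarrow> real" where "blz u v = (cmod u)\<^sup>2 - (cmod v)\<^sup>2"

lemmas bl_defs = bln_def blx_def bly_def blz_def

lemma bloch_sq: "(blx u v)\<^sup>2 + (bly u v)\<^sup>2 + (blz u v)\<^sup>2 = (bln u v)\<^sup>2"
  by (simp add: bl_defs cmod_power2) (simp add: power2_eq_square algebra_simps)

lemma bln_nonneg: "bln u v \<ge> 0"
  by (simp add: bl_defs)

lemma ov1: "2 * (cmod (braket (ket u v) (ket 1 0)))\<^sup>2 = bln u v + blz u v"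
  by (simp add: braket_ket bl_defs)
lemma ov2: "2 * (cmod (braket (ket u v) (ket 0 1)))\<^sup>2 = bln u v - blz u v"
  by (simp add: braket_ket bl_defs)
lemma ov3: "2 * (cmod (braket (ket u v) (ket (1 / sqrt 2) (1 / sqrt 2))))\<^sup>2 = bln u v + blx u v"
  by (simp add: braket_ket bl_defs cmod_power2 power_divide Re_divide_of_real Im_divide_of_real) (simp add: power2_eq_square field_simps)
lemma ov4: "2 * (cmod (braket (ket u v) (ket (1 / sqrt 2) (- 1 / sqrt 2))))\<^sup>2 = bln u v - blx u v"
  by (simp add: braket_ket bl_defs cmod_power2 power_divide Re_divide_of_real Im_divide_of_real) (simp add: power2_eq_square field_simps)
lemma ov5: "2 * (cmod (braket (ket u v) (ket (1 / sqrt 2) (\<i> / sqrt 2))))\<^sup>2 = bln u v + bly u v"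
  by (simp add: braket_ket bl_defs cmod_power2 power_divide Re_divide_of_real Im_divide_of_real) (simp add: power2_eq_square field_simps)
lemma ov6: "2 * (cmod (braket (ket u v) (ket (1 / sqrt 2) (- \<i> / sqrt 2))))\<^sup>2 = bln u v - bly u v"
  by (simp add: braket_ket bl_defs cmod_power2 power_divide Re_divide_of_real Im_divide_of_real) (simp add: power2_eq_square field_simps)

lemma value_bloch: "2 * (cmod (braket (ket a b) (ket u v)))\<^sup>2 =
   bln a b * bln u v + blx a b * blx u v + bly a b * bly u v + blz a b * blz u v"
  by (simp add: braket_ket bl_defs cmod_power2) (simp add: power2_eq_square algebra_simps)

lemma expX: "expect (outer (ket a b) (ket a b)) PauliX = blx a b"
  by (simp add: expect_def outer_ket PauliX_def mat2_mult trace_mat2 bl_defs)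
lemma expY: "expect (outer (ket a b) (ket a b)) PauliY = bly a b"
  by (simp add: expect_def outer_ket PauliY_def mat2_mult trace_mat2 bl_defs)
lemma expZ: "expect (outer (ket a b) (ket a b)) PauliZ = blz a b"
  by (simp add: expect_def outer_ket PauliZ_def mat2_mult trace_mat2 bl_defs cmod_power2) (simp add: power2_eq_square)

lemma stab_mem: "cmod c = 1 \<Longrightarrow> s \<in> stab_reps \<Longrightarrow> c *s s \<in> stab_states"
  unfolding stab_states_def by blast

lemma witness_reps: "omega_witness w \<longleftrightarrow> (\<forall>s\<in>stab_reps. cmod (braket w s) \<le> 1)"
proof
  assume "omega_witness w"
  show "\<forall>s\<in>stab_reps. cmod (braket w s) \<le> 1"
  proof
    fix s assume "s \<in> stab_reps"
    then have "1 *s s \<in> stab_states" by (intro stab_mem) simp_all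
    then have "cmod (braket w (1 *s s)) \<le> 1" using \<open>omega_witness w\<close>
      unfolding omega_witness_def by blast
    then show "cmod (braket w s) \<le> 1" by simp
  qed
next
  assume H: "\<forall>s\<in>stab_reps. cmod (braket w s) \<le> 1"
  show "omega_witness w"
    unfolding omega_witness_def stab_states_def
  proof safe
    fix c :: complex and s assume "cmod c = 1" "s \<in> stab_reps"
    then show "cmod (braket w (c *s s)) \<le> 1"
      using H by (simp add: braket_scale norm_mult)
  qed
qed

lemma cmod_le1: "cmod z \<le> 1 \<longleftrightarrow> 2 * (cmod z)\<^sup>2 \<le> 2"
  using abs_square_le_1[of "cmod z"] by simp

lemma witness_bloch: "omega_witness (ket u v) \<longleftrightarrow>
   (bln u v + blz u v \<le> 2 \<and> bln u v - blz u v \<le> 2 \<and> bln u v + blx u v \<le> 2 \<and>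
    bln u v - blx u v \<le> 2 \<and> bln u v + bly u v \<le> 2 \<and> bln u v - bly u v \<le> 2)"
  unfolding witness_reps stab_reps_def
  apply (simp only: ball_simps cmod_le1 ov1 ov2 ov3 ov4 ov5 ov6 simp_thms)
  done

lemma xi_lower:
  assumes "omega_witness w"
  shows "(cmod (braket \<Psi> w))\<^sup>2 \<le> xi \<Psi>"
  unfolding xi_def
proof (rule cInf_greatest)
  let ?c = "\<lambda>j::nat. if j = 0 then \<Psi>$1 else \<Psi>$2"
  let ?p = "\<lambda>j::nat. if j = 0 then ket 1 0 else ket 0 1"
  have "ket 1 0 \<in> stab_states" "ket 0 1 \<in> stab_states"
    using stab_mem[of 1 "ket 1 0"] stab_mem[of 1 "ket 0 1"] by (auto simp: stab_reps_def)
  then have st: "\<forall>j<2. ?p j \<in> stab_states" by auto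
  have d1: "(\<Sum>j<2. ?c j *s ?p j) = \<Psi>$1 *s ket 1 0 + \<Psi>$2 *s ket 0 1"
    by (simp add: numeral_2_eq_2)
  have d2: "\<Psi>$1 *s ket 1 0 + \<Psi>$2 *s ket 0 1 = \<Psi>"
    by (simp add: ket_def vec_eq_iff forall_2)
  have dec: "\<Psi> = (\<Sum>j<2. ?c j *s ?p j)" unfolding d1 d2 ..
  have "(\<Sum>j<2. cmod (?c j))\<^sup>2 \<in> {(\<Sum>j<n. cmod (c j))\<^sup>2 | (n::nat) (c::nat \<Rightarrow> complex) (\<phi>::nat \<Rightarrow> qvec).
                 (\<forall>j<n. \<phi> j \<in> stab_states) \<and> \<Psi> = (\<Sum>j<n. c j *s \<phi> j)}"
    unfolding mem_Collect_eq
    apply (intro exI[where x=2] exI[where x="?c"] exI[where x="?p"] conjI refl)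
     apply (rule st)
    by (rule dec)
  then show "{(\<Sum>j<n. cmod (c j))\<^sup>2 | (n::nat) (c::nat \<Rightarrow> complex) (\<phi>::nat \<Rightarrow> qvec).
                 (\<forall>j<n. \<phi> j \<in> stab_states) \<and> \<Psi> = (\<Sum>j<n. c j *s \<phi> j)} \<noteq> {}"
    by blast
next
  fix x assume "x \<in> {(\<Sum>j<n. cmod (c j))\<^sup>2 | (n::nat) (c::nat \<Rightarrow> complex) (\<phi>::nat \<Rightarrow> qvec).
                 (\<forall>j<n. \<phi> j \<in> stab_states) \<and> \<Psi> = (\<Sum>j<n. c j *s \<phi> j)}"
  then obtain n c \<phi> where x: "x = (\<Sum>j<(n::nat). cmod (c j))\<^sup>2"
    and st: "\<forall>j<n. \<phi> j \<in> stab_states" and dec: "\<Psi> = (\<Sum>j<n. c j *s \<phi> j)" by blast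
  have "cmod (braket \<Psi> w) = cmod (braket w \<Psi>)"
    by (subst braket_cnj) simp
  also have "braket w \<Psi> = (\<Sum>j<n. c j * braket w (\<phi> j))"
    by (simp add: dec braket_sum braket_scale)
  also have "cmod \<dots> \<le> (\<Sum>j<n. cmod (c j * braket w (\<phi> j)))"
    by (rule norm_sum)
  also have "\<dots> \<le> (\<Sum>j<n. cmod (c j))"
  proof (rule sum_mono)
    fix j assume "j \<in> {..<n}"
    then have "cmod (braket w (\<phi> j)) \<le> 1" using st assms by (auto simp: omega_witness_def)
    then show "cmod (c j * braket w (\<phi> j)) \<le> cmod (c j)"
      by (simp add: norm_mult mult_left_le)
  qed
  finally show "(cmod (braket \<Psi> w))\<^sup>2 \<le> x"
    unfolding x by (rule power_mono) simp
qed

lemma cert3: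
  fixes px py pz n sx sy sz r3 k :: real
  assumes r3: "r3\<^sup>2 = 3" "r3 > 0"
    and k: "k * (3 + r3) = px + py + pz - 1" and kpos: "k > 0"
    and mu: "k \<le> px" "k \<le> py" "k \<le> pz"
    and sq: "sx\<^sup>2 + sy\<^sup>2 + sz\<^sup>2 = n\<^sup>2" and n0: "n \<ge> 0"
    and f: "n + sx \<le> 2" "n + sy \<le> 2" "n + sz \<le> 2"
    and val: "n + sx * px + sy * py + sz * pz \<ge> 2 * (px + py + pz - 3 * k)"
  shows "sx = sy \<and> sy = sz \<and> n + sx = 2 \<and> sx \<ge> 0"
proof -
  define T where "T = sx + sy + sz"
  have T3: "3 * n\<^sup>2 - T\<^sup>2 = ((sx - sy)\<^sup>2 + (sy - sz)\<^sup>2 + (sx - sz)\<^sup>2)"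
    unfolding T_def sq[symmetric] by (simp add: power2_eq_square algebra_simps)
  have Tle: "T \<le> r3 * n"
  proof (rule ccontr)
    assume "\<not> T \<le> r3 * n"
    then have "r3 * n < T" by simp
    moreover have "0 \<le> r3 * n" using r3 n0 by simp
    ultimately have "(r3 * n)\<^sup>2 < T\<^sup>2" by (simp add: power_strict_mono)
    then have "3 * n\<^sup>2 < T\<^sup>2" using r3 by (simp add: power_mult_distrib)
    with T3 show False by (smt (verit) zero_le_power2)
  qed
  have id: "n + sx * px + sy * py + sz * pz - 2 * (px + py + pz - 3 * k)
      = (px - k) * (n + sx - 2) + (py - k) * (n + sy - 2) + (pz - k) * (n + sz - 2)
        + k * (T - r3 * n) + n * (k * (3 + r3) - (px + py + pz - 1))"
    unfolding T_def by (simp add: algebra_simps)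
  have a1: "(px - k) * (n + sx - 2) \<le> 0" using mu f by (simp add: mult_nonneg_nonpos)
  have a2: "(py - k) * (n + sy - 2) \<le> 0" using mu f by (simp add: mult_nonneg_nonpos)
  have a3: "(pz - k) * (n + sz - 2) \<le> 0" using mu f by (simp add: mult_nonneg_nonpos)
  have a4: "k * (T - r3 * n) \<le> 0" using kpos Tle by (simp add: mult_nonneg_nonpos)
  have z0: "n * (k * (3 + r3) - (px + py + pz - 1)) = 0" using k by simp
  have z: "(px - k) * (n + sx - 2) = 0" "(py - k) * (n + sy - 2) = 0" "(pz - k) * (n + sz - 2) = 0"
      "k * (T - r3 * n) = 0"
    using id val a1 a2 a3 a4 z0 by linarith+
  then have TT: "T = r3 * n" using kpos by simp
  then have "T\<^sup>2 = 3 * n\<^sup>2" using r3 by (simp add: power_mult_distrib)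
  then have "(sx - sy)\<^sup>2 + (sy - sz)\<^sup>2 + (sx - sz)\<^sup>2 = 0" using T3 by simp
  then have e: "sx = sy" "sy = sz"
    by (smt (verit) zero_eq_power2 zero_le_power2)+
  have "n + sx = 2"
  proof (rule ccontr)
    assume "n + sx \<noteq> 2"
    then have "px = k" "py = k" "pz = k" using z e by auto
    then have "k * (3 + r3) = 3 * k - 1" using k by simp
    then have "k * r3 = -1" by (simp add: algebra_simps)
    moreover have "k * r3 > 0" using kpos r3 by simp
    ultimately show False by simp
  qed
  moreover have "sx \<ge> 0"
  proof -
    have "r3 * n \<ge> 0" using r3 n0 by simp
    then show ?thesis using TT e unfolding T_def by linarith
  qed
  ultimately show ?thesis using e by simp
qed

lemma cert2:
  fixes px py pz n sx sy sz r2 D R :: real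
  assumes r2: "r2\<^sup>2 = 2" "r2 > 0"
    and D: "D = px + pz - 1" and R: "R\<^sup>2 = D\<^sup>2 + py\<^sup>2" "R \<ge> 0" and Dpos: "D > 0"
    and py: "py \<ge> 0" and reg: "r2 * (D - py) \<ge> R" and p1: "px \<le> 1" "pz \<le> 1"
    and sq: "sx\<^sup>2 + sy\<^sup>2 + sz\<^sup>2 = n\<^sup>2" and n0: "n \<ge> 0"
    and f: "n + sx \<le> 2" "n + sz \<le> 2"
    and val: "n + sx * px + sy * py + sz * pz \<ge> 2 * (1 - D + r2 * R)"
  shows "n + sx = 2 \<and> sx = sz \<and> 0 \<le> sy \<and> sy \<le> sx"
proof -
  have RD: "R \<ge> D"
  proof (rule ccontr)
    assume "\<not> R \<ge> D" then have "R < D" by simp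
    then have "R\<^sup>2 < D\<^sup>2" using R(2) by (simp add: power_strict_mono)
    then show False using R(1) by (smt (verit) zero_le_power2)
  qed
  then have Rpos: "R > 0" using Dpos by simp
  define k where "k = r2 * R - D"
  have r2gt: "r2 > 1"
  proof (rule ccontr)
    assume "\<not> r2 > 1" then have "r2 \<le> 1" by simp
    then have "r2\<^sup>2 \<le> 1" using r2(2) by (simp add: power_le_one)
    then show False using r2(1) by simp
  qed
  have kpos: "k > 0"
  proof -
    have "r2 * R > 1 * R" using r2gt Rpos by (intro mult_strict_right_mono) auto
    then show ?thesis unfolding k_def using RD by simp
  qed
  define wx where "wx = D - r2 * R / 2"
  have w2: "2 * wx\<^sup>2 + py\<^sup>2 = k\<^sup>2"
  proof -
    have "2 * wx\<^sup>2 + py\<^sup>2 = 2 * D\<^sup>2 - 2 * D * r2 * R + r2\<^sup>2 * R\<^sup>2 / 2 + py\<^sup>2"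
      unfolding wx_def by (simp add: power2_eq_square algebra_simps)
    also have "\<dots> = 2 * D\<^sup>2 - 2 * D * r2 * R + R\<^sup>2 + py\<^sup>2" using r2 by simp
    also have "\<dots> = k\<^sup>2" unfolding k_def using R(1) r2(1)
      by (simp add: power2_eq_square algebra_simps)
    finally show ?thesis .
  qed
  define mx where "mx = 1 - pz + r2 * R / 2"
  define mz where "mz = 1 - px + r2 * R / 2"
  have rr: "r2 * R > 0" using r2 Rpos by simp
  have mxp: "mx > 0" "mz > 0" unfolding mx_def mz_def using p1 rr by linarith+
  define dot where "dot = sx * wx + sy * py + sz * wx"
  have id: "n + sx * px + sy * py + sz * pz - 2 * (1 - D + r2 * R)
      = mx * (n + sx - 2) + mz * (n + sz - 2) + (dot - k * n)"
    unfolding mx_def mz_def dot_def wx_def k_def D by (simp add: field_simps)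
  have nrm: "(k * sx - n * wx)\<^sup>2 + (k * sy - n * py)\<^sup>2 + (k * sz - n * wx)\<^sup>2
      = 2 * k * n * (k * n - dot)"
  proof -
    have "(k * sx - n * wx)\<^sup>2 + (k * sy - n * py)\<^sup>2 + (k * sz - n * wx)\<^sup>2
        = k\<^sup>2 * (sx\<^sup>2 + sy\<^sup>2 + sz\<^sup>2) + n\<^sup>2 * (2 * wx\<^sup>2 + py\<^sup>2) - 2 * k * n * dot"
      unfolding dot_def by (simp add: power2_eq_square algebra_simps)
    also have "\<dots> = 2 * k * n * (k * n - dot)" unfolding sq w2
      by (simp add: power2_eq_square algebra_simps)
    finally show ?thesis .
  qed
  have dotle: "dot \<le> k * n"
  proof (cases "n = 0")
    case True
    then have "sx = 0" "sy = 0" "sz = 0" using sq by (smt (verit) zero_eq_power2 zero_le_power2)+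
    then show ?thesis unfolding dot_def using True by simp
  next
    case False
    then have "n > 0" using n0 by simp
    have "0 \<le> (2 * k * n) * (k * n - dot)" unfolding nrm[symmetric] by simp
    moreover have "2 * k * n > 0" using kpos \<open>n > 0\<close> by simp
    ultimately have "k * n - dot \<ge> 0" by (simp add: zero_le_mult_iff)
    then show ?thesis by simp
  qed
  have a1: "mx * (n + sx - 2) \<le> 0" using mxp f by (simp add: mult_nonneg_nonpos)
  have a2: "mz * (n + sz - 2) \<le> 0" using mxp f by (simp add: mult_nonneg_nonpos)
  have z: "mx * (n + sx - 2) = 0" "mz * (n + sz - 2) = 0" "dot = k * n"
    using id val a1 a2 dotle by linarith+
  then have t1: "n + sx = 2" "n + sz = 2" using mxp by auto
  have "(k * sx - n * wx)\<^sup>2 + (k * sy - n * py)\<^sup>2 + (k * sz - n * wx)\<^sup>2 = 0"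
    using nrm z by simp
  then have e: "k * sx = n * wx" "k * sy = n * py" "k * sz = n * wx"
    by (smt (verit) zero_eq_power2 zero_le_power2)+
  have "sx = sz" using e kpos by (metis mult_cancel_left less_irrefl)
  moreover have "sy \<ge> 0"
  proof -
    have "k * sy \<ge> 0" using e n0 py by simp
    then show ?thesis using kpos by (simp add: zero_le_mult_iff)
  qed
  moreover have "sy \<le> sx"
  proof -
    have "wx - py \<ge> 0"
    proof -
      have "r2 * (wx - py) = r2 * (D - py) - r2 * r2 * R / 2" unfolding wx_def
        by (simp add: algebra_simps)
      also have "\<dots> = r2 * (D - py) - R" using r2(1) by (simp add: power2_eq_square)
      finally have "r2 * (wx - py) \<ge> 0" using reg by simp
      then show ?thesis using r2 by (simp add: zero_le_mult_iff)
    qed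
    then have "k * (sx - sy) \<ge> 0" using e n0 by (simp add: right_diff_distrib mult_left_mono)
    then show ?thesis using kpos by (simp add: zero_le_mult_iff)
  qed
  ultimately show ?thesis using t1 by simp
qed

lemma bl_one: "bln 1 v = 1 + (Re v)\<^sup>2 + (Im v)\<^sup>2" "blx 1 v = 2 * Re v" "bly 1 v = 2 * Im v"
  "blz 1 v = 1 - (Re v)\<^sup>2 - (Im v)\<^sup>2"
  by (simp_all add: bl_defs cmod_power2)

lemma norm_bln: "norm (ket a b) = 1 \<Longrightarrow> bln a b = 1"
  by (simp add: norm_vec_def L2_set_def sum_2 ket_def bln_def)

lemma omega3:
  fixes t :: real
  defines "t \<equiv> (sqrt 3 - 1) / 2"
  shows "bln 1 (Complex t t) = 3 - sqrt 3" "blx 1 (Complex t t) = sqrt 3 - 1"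
    "bly 1 (Complex t t) = sqrt 3 - 1" "blz 1 (Complex t t) = sqrt 3 - 1"
proof -
  have "t\<^sup>2 = (2 - sqrt 3) / 2" unfolding t_def
    by (simp add: power2_eq_square field_simps)
  then show "bln 1 (Complex t t) = 3 - sqrt 3" "blx 1 (Complex t t) = sqrt 3 - 1"
    "bly 1 (Complex t t) = sqrt 3 - 1" "blz 1 (Complex t t) = sqrt 3 - 1"
    by (simp_all add: bl_one t_def)
qed

lemma omega3_wit: "omega_witness (ket 1 (Complex ((sqrt 3 - 1) / 2) ((sqrt 3 - 1) / 2)))"
proof -
  have "sqrt 3 \<ge> 1" by simp
  then show ?thesis unfolding witness_bloch omega3 by simp
qed

lemma omega2:
  fixes D py R r2 :: real
  assumes R: "R\<^sup>2 = D\<^sup>2 + py\<^sup>2" "R > 0" and r2: "r2\<^sup>2 = 2"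
  shows "bln 1 (Complex (r2 * D / R - 1) (r2 * py / R)) = 4 - 2 * (r2 * D / R)"
    "blx 1 (Complex (r2 * D / R - 1) (r2 * py / R)) = 2 * (r2 * D / R) - 2"
    "bly 1 (Complex (r2 * D / R - 1) (r2 * py / R)) = 2 * (r2 * py / R)"
    "blz 1 (Complex (r2 * D / R - 1) (r2 * py / R)) = 2 * (r2 * D / R) - 2"
proof -
  have "(r2 * D / R - 1)\<^sup>2 + (r2 * py / R)\<^sup>2 = r2\<^sup>2 * (D\<^sup>2 + py\<^sup>2) / R\<^sup>2 - 2 * (r2 * D / R) + 1"
    using R(2) by (simp add: power2_eq_square field_simps)
  also have "\<dots> = 3 - 2 * (r2 * D / R)" using R(2) r2 by (simp add: R(1)[symmetric])
  finally have e: "(r2 * D / R - 1)\<^sup>2 + (r2 * py / R)\<^sup>2 = 3 - 2 * (r2 * D / R)" .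
  show "bln 1 (Complex (r2 * D / R - 1) (r2 * py / R)) = 4 - 2 * (r2 * D / R)"
    "blx 1 (Complex (r2 * D / R - 1) (r2 * py / R)) = 2 * (r2 * D / R) - 2"
    "bly 1 (Complex (r2 * D / R - 1) (r2 * py / R)) = 2 * (r2 * py / R)"
    "blz 1 (Complex (r2 * D / R - 1) (r2 * py / R)) = 2 * (r2 * D / R) - 2"
    unfolding bl_one using e by (simp_all only: Re_complex_of_real complex.sel) (linarith | simp add: right_diff_distrib)+
qed

lemma mat_form:
  fixes m t :: real
  shows "PauliI + m *\<^sub>R (PauliX + PauliZ) + t *\<^sub>R PauliY =
     mat2 (1 + of_real m) (of_real m - \<i> * of_real t) (of_real m + \<i> * of_real t) (1 - of_real m)"
  by (simp add: PauliI_def PauliX_def PauliY_def PauliZ_def mat2_add mat2_scaleR)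
    (simp add: scaleR_conv_of_real mat2_eq_iff)

lemma outer_form:
  assumes h1: "bln u v + blx u v = 2" and h2: "blx u v = blz u v"
  shows "outer (ket u v) (ket u v) = (1 / (1 + blx u v / bln u v)) *\<^sub>R
     (PauliI + (blx u v / bln u v) *\<^sub>R (PauliX + PauliZ) + (bly u v / bln u v) *\<^sub>R PauliY)"
proof -
  define n where "n = bln u v"
  have npos: "n > 0"
  proof -
    have "n \<ge> 0" unfolding n_def by (rule bln_nonneg)
    moreover have "n \<noteq> 0"
    proof
      assume "n = 0"
      then have "blx u v = 0" using bloch_sq[of u v] unfolding n_def
        by (smt (verit) zero_eq_power2 zero_le_power2)
      then show False using h1 \<open>n = 0\<close> unfolding n_def by simp
    qed
    ultimately show ?thesis by simp
  qed
  have inv: "1 / (1 + blx u v / bln u v) = n / 2"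
    using h1 npos unfolding n_def[symmetric] by (simp add: field_simps)
  have u2: "(cmod u)\<^sup>2 = 1" using h1 h2 unfolding bl_defs by simp
  have v2: "(cmod v)\<^sup>2 = (n - blx u v) / 2" using h2 unfolding n_def bl_defs by simp
  show ?thesis
    unfolding outer_ket mat_form inv mat2_scaleR mat2_eq_iff
  proof (intro conjI)
    show "u * cnj u = (n / 2) *\<^sub>R (1 + complex_of_real (blx u v / bln u v))"
    proof -
      have r11: "(n/2) * (1 + blx u v / n) = 1" using npos h1 unfolding n_def[symmetric]
        by (simp add: field_simps)
      have "u * cnj u = 1" using u2 complex_norm_square[of u] by simp
      moreover have "(n / 2) *\<^sub>R (1 + complex_of_real (blx u v / bln u v)) = complex_of_real ((n/2) * (1 + blx u v / n))"
        by (simp only: n_def scaleR_conv_of_real of_real_mult of_real_add of_real_1)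
      ultimately show ?thesis using r11 by (simp only: of_real_1)
    qed
    show "u * cnj v = (n / 2) *\<^sub>R (complex_of_real (blx u v / bln u v) - \<i> * complex_of_real (bly u v / bln u v))"
      using npos unfolding n_def[symmetric]
      by (simp add: complex_eq_iff scaleR_conv_of_real n_def blx_def bly_def field_simps)
    show "v * cnj u = (n / 2) *\<^sub>R (complex_of_real (blx u v / bln u v) + \<i> * complex_of_real (bly u v / bln u v))"
      using npos unfolding n_def[symmetric]
      by (simp add: complex_eq_iff scaleR_conv_of_real n_def blx_def bly_def field_simps)
    show "v * cnj v = (n / 2) *\<^sub>R (1 - complex_of_real (blx u v / bln u v))"
    proof -
      have r22: "(n/2) * (1 - blx u v / n) = (n - blx u v) / 2" using npos
        by (simp add: field_simps)
      have A: "v * cnj v = complex_of_real ((n - blx u v) / 2)" by (simp only: complex_norm_square[symmetric] v2)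
      have B: "(n / 2) *\<^sub>R (1 - complex_of_real (blx u v / bln u v)) = complex_of_real ((n/2) * (1 - blx u v / n))"
        by (simp only: n_def scaleR_conv_of_real of_real_mult of_real_diff of_real_1)
      show ?thesis by (simp only: A B r22)
    qed
  qed
qed

lemma final1:
  assumes h: "bln u v + blx u v = 2" "blx u v = blz u v" "0 \<le> bly u v" "bly u v \<le> blx u v"
  shows "\<exists>q::real. sqrt (2/3) \<le> q \<and> q \<le> 1 \<and> outer (ket u v) (ket u v) = (1 / (1 + q / sqrt 2)) *\<^sub>R
             (PauliI + (q / sqrt 2) *\<^sub>R (PauliX + PauliZ) + sqrt (1 - q\<^sup>2) *\<^sub>R PauliY)"
proof -
  define n where "n = bln u v"
  define m where "m = blx u v / n"
  define t where "t = bly u v / n"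
  have sq: "(blx u v)\<^sup>2 + (bly u v)\<^sup>2 + (blz u v)\<^sup>2 = n\<^sup>2" unfolding n_def by (rule bloch_sq)
  have npos: "n > 0"
  proof -
    have "n \<ge> 0" unfolding n_def by (rule bln_nonneg)
    moreover have "n \<noteq> 0"
    proof
      assume "n = 0"
      then have "blx u v = 0" using sq by (smt (verit) zero_eq_power2 zero_le_power2)
      then show False using h(1) \<open>n = 0\<close> unfolding n_def by simp
    qed
    ultimately show ?thesis by simp
  qed
  have mt: "2 * m\<^sup>2 + t\<^sup>2 = 1"
  proof -
    have "2 * (blx u v)\<^sup>2 + (bly u v)\<^sup>2 = n\<^sup>2" using sq h(2) by simp
    then show ?thesis unfolding m_def t_def using npos by (simp add: field_simps power2_eq_square)
  qed
  have t0: "0 \<le> t" unfolding t_def using h(3) npos by simp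
  have tm: "t \<le> m" unfolding t_def m_def using h(4) npos by (simp add: divide_right_mono)
  define q where "q = sqrt 2 * m"
  have qm: "q / sqrt 2 = m" unfolding q_def by simp
  have q2: "q\<^sup>2 = 2 * m\<^sup>2" unfolding q_def by (simp add: power_mult_distrib)
  have q0: "q \<ge> 0" unfolding q_def using t0 tm by simp
  have sqt: "sqrt (1 - q\<^sup>2) = t" using q2 mt t0 by (intro real_sqrt_unique) simp_all
  have "t\<^sup>2 \<le> m\<^sup>2" using t0 tm by (simp add: power_mono)
  then have "q\<^sup>2 \<ge> 2/3" using q2 mt by simp
  then have "sqrt (2/3) \<le> sqrt (q\<^sup>2)" by (rule real_sqrt_le_mono)
  then have ql: "sqrt (2/3) \<le> q" using q0 by simp
  have "q\<^sup>2 \<le> 1" using q2 mt by (smt (verit) zero_le_power2)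
  then have qu: "q \<le> 1" using q0 abs_square_le_1[of q] by simp
  have "outer (ket u v) (ket u v) = (1 / (1 + m)) *\<^sub>R
     (PauliI + m *\<^sub>R (PauliX + PauliZ) + t *\<^sub>R PauliY)"
    unfolding m_def t_def n_def using h(1,2) by (rule outer_form)
  then show ?thesis using ql qu unfolding qm[symmetric] sqt[symmetric] by blast
qed

lemma final2:
  assumes h: "bln u v + blx u v = 2" "blx u v = blz u v" "0 \<le> bly u v" "bly u v = blx u v"
  shows "outer (ket u v) (ket u v) = (1 / (1 + 1 / sqrt 3)) *\<^sub>R
             (PauliI + (1 / sqrt 3) *\<^sub>R (PauliX + PauliY + PauliZ))"
proof -
  define n where "n = bln u v"
  define m where "m = blx u v / n"
  have sq: "(blx u v)\<^sup>2 + (bly u v)\<^sup>2 + (blz u v)\<^sup>2 = n\<^sup>2" unfolding n_def by (rule bloch_sq)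
  have npos: "n > 0"
  proof -
    have "n \<ge> 0" unfolding n_def by (rule bln_nonneg)
    moreover have "n \<noteq> 0"
    proof
      assume "n = 0"
      then have "blx u v = 0" using sq by (smt (verit) zero_eq_power2 zero_le_power2)
      then show False using h(1) \<open>n = 0\<close> unfolding n_def by simp
    qed
    ultimately show ?thesis by simp
  qed
  have "3 * (blx u v)\<^sup>2 = n\<^sup>2" using sq h(2,4) by simp
  then have m2: "m\<^sup>2 = 1 / 3" unfolding m_def using npos by (simp add: field_simps power2_eq_square)
  have m0: "m \<ge> 0" unfolding m_def using h(3,4) npos by simp
  have "sqrt (1/3) = m" using m2 m0 by (intro real_sqrt_unique) simp_all
  then have m3: "m = 1 / sqrt 3" by (simp add: real_sqrt_divide)
  have "outer (ket u v) (ket u v) = (1 / (1 + m)) *\<^sub>R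
     (PauliI + m *\<^sub>R (PauliX + PauliZ) + m *\<^sub>R PauliY)"
    using outer_form[OF h(1,2)] h(4) unfolding m_def n_def by simp
  also have "\<dots> = (1 / (1 + m)) *\<^sub>R (PauliI + m *\<^sub>R (PauliX + PauliY + PauliZ))"
    by (simp add: scaleR_add_right algebra_simps)
  finally show ?thesis unfolding m3 .
qed

lemma deg_real:
  fixes px py pz :: real
  assumes "px \<ge> 0" "py \<ge> 0" "pz \<ge> 0" "px\<^sup>2 + py\<^sup>2 + pz\<^sup>2 = 1" "py \<le> px" "py \<le> pz"
    "px + py + pz \<le> 1"
  shows "(px = 0 \<and> pz = 1) \<or> (pz = 0 \<and> px = 1)"
proof -
  define S where "S = px + py + pz"
  have "S * S \<le> 1 * 1" using assms unfolding S_def by (intro mult_mono) auto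
  moreover have "S * S = 1 + 2 * (px * py + py * pz + px * pz)"
    using assms(4) unfolding S_def by (simp add: power2_eq_square algebra_simps)
  ultimately have "px * py + py * pz + px * pz \<le> 0" by simp
  moreover have "px * py \<ge> 0" "py * pz \<ge> 0" "px * pz \<ge> 0" using assms by simp_all
  ultimately have z: "px * py = 0" "px * pz = 0" by linarith+
  have "py = 0" using z(1) assms by (cases "px = 0") auto
  show ?thesis
  proof (cases "px = 0")
    case True
    then have "pz\<^sup>2 = 1" using assms(4) \<open>py = 0\<close> by simp
    then have "pz = 1" using assms(3) by (simp add: power2_eq_1_iff)
    then show ?thesis using True by simp
  next
    case False
    then have "pz = 0" using z(2) by simp
    then have "px\<^sup>2 = 1" using assms(4) \<open>py = 0\<close> by simp
    then have "px = 1" using assms(1) by (simp add: power2_eq_1_iff)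
    then show ?thesis using \<open>pz = 0\<close> by simp
  qed
qed

lemma cmod_sq1: "(cmod z)\<^sup>2 = 1 \<Longrightarrow> cmod z = 1"
  by (metis abs_norm_cancel abs_square_eq_1)

lemma deg_stab:
  assumes N: "bln a b = 1" and c: "(blx a b = 0 \<and> blz a b = 1) \<or> (blz a b = 0 \<and> blx a b = 1)"
  shows "ket a b \<in> stab_states"
  using c
proof
  assume h: "blx a b = 0 \<and> blz a b = 1"
  then have "(cmod a)\<^sup>2 - (cmod b)\<^sup>2 = 1" "(cmod a)\<^sup>2 + (cmod b)\<^sup>2 = 1"
    using N unfolding bl_defs by simp_all
  then have "(cmod b)\<^sup>2 = 0" "(cmod a)\<^sup>2 = 1" by linarith+
  then have "b = 0" "cmod a = 1" by (simp_all add: cmod_sq1)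
  moreover have "ket a 0 = a *s ket 1 0" by (simp add: ket_def vec_eq_iff forall_2)
  ultimately show ?thesis using stab_mem[of a "ket 1 0"] by (simp add: stab_reps_def)
next
  assume h: "blz a b = 0 \<and> blx a b = 1"
  then have e: "(cmod a)\<^sup>2 = 1/2" "(cmod b)\<^sup>2 = 1/2" "2 * Re (a * cnj b) = 1"
    using N unfolding bl_defs by simp_all
  have "(Re a - Re b)\<^sup>2 + (Im a - Im b)\<^sup>2 = (cmod a)\<^sup>2 + (cmod b)\<^sup>2 - 2 * Re (a * cnj b)"
    by (simp add: cmod_power2) (simp add: power2_eq_square algebra_simps)
  also have "\<dots> = 0" using e by simp
  finally have "Re a = Re b" "Im a = Im b" by (smt (verit) zero_eq_power2 zero_le_power2)+
  then have ab: "a = b" by (simp add: complex_eq_iff)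
  have "(cmod (complex_of_real (sqrt 2) * a))\<^sup>2 = 1" using e(1) by (simp add: norm_mult power_mult_distrib)
  then have cm: "cmod (complex_of_real (sqrt 2) * a) = 1" by (rule cmod_sq1)
  have "ket a a = (complex_of_real (sqrt 2) * a) *s ket (1 / sqrt 2) (1 / sqrt 2)"
    by (simp add: ket_def vec_eq_iff forall_2)
  then show ?thesis using stab_mem[OF cm, of "ket (1 / sqrt 2) (1 / sqrt 2)"] ab
    by (simp add: stab_reps_def)
qed

theorem lemma3:
  fixes \<Psi> \<omega> :: qvec
  assumes pure: "norm \<Psi> = 1"
    and nonstab: "\<Psi> \<notin> stab_states"
    and PY: "in_PY (outer \<Psi> \<Psi>)"
    and wit: "omega_witness \<omega>"
    and opt: "(cmod (braket \<Psi> \<omega>))\<^sup>2 = xi \<Psi>"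
  shows "(\<exists>q::real. sqrt (2/3) \<le> q \<and> q \<le> 1 \<and>
           outer \<omega> \<omega> = (1 / (1 + q / sqrt 2)) *\<^sub>R
             (PauliI + (q / sqrt 2) *\<^sub>R (PauliX + PauliZ) + sqrt (1 - q\<^sup>2) *\<^sub>R PauliY))
       \<and> ((in_PX (outer \<Psi> \<Psi>) \<or> in_PZ (outer \<Psi> \<Psi>)) \<longrightarrow>
           outer \<omega> \<omega> = (1 / (1 + 1 / sqrt 3)) *\<^sub>R
             (PauliI + (1 / sqrt 3) *\<^sub>R (PauliX + PauliY + PauliZ)))"
proof -
  obtain a b where Psi: "\<Psi> = ket a b" using qvec_ket by blast
  obtain u v where Om: "\<omega> = ket u v" using qvec_ket by blast
  define px where "px = blx a b"
  define py where "py = bly a b"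
  define pz where "pz = blz a b"
  define n where "n = bln u v"
  define sx where "sx = blx u v"
  define sy where "sy = bly u v"
  define sz where "sz = blz u v"
  have N: "bln a b = 1" using pure unfolding Psi by (rule norm_bln)
  have unit: "px\<^sup>2 + py\<^sup>2 + pz\<^sup>2 = 1" using bloch_sq[of a b] N unfolding px_def py_def pz_def by simp
  have P: "px \<ge> 0" "py \<ge> 0" "pz \<ge> 0" "py \<le> px" "py \<le> pz"
    using PY unfolding in_PY_def in_P_def Psi expX expY expZ px_def py_def pz_def by auto
  have W: "n + sz \<le> 2" "n - sz \<le> 2" "n + sx \<le> 2" "n - sx \<le> 2" "n + sy \<le> 2" "n - sy \<le> 2"
    using wit unfolding Om witness_bloch n_def sx_def sy_def sz_def by auto
  have sq: "sx\<^sup>2 + sy\<^sup>2 + sz\<^sup>2 = n\<^sup>2" unfolding sx_def sy_def sz_def n_def by (rule bloch_sq)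
  have n0: "n \<ge> 0" unfolding n_def by (rule bln_nonneg)
  have val: "bln u' v' + blx u' v' * px + bly u' v' * py + blz u' v' * pz \<le> n + sx * px + sy * py + sz * pz"
    if w': "omega_witness (ket u' v')" for u' v'
  proof -
    have "(cmod (braket \<Psi> (ket u' v')))\<^sup>2 \<le> xi \<Psi>" using w' by (rule xi_lower)
    then have "2 * (cmod (braket (ket a b) (ket u' v')))\<^sup>2 \<le> 2 * (cmod (braket (ket a b) (ket u v)))\<^sup>2"
      using opt unfolding Psi Om by simp
    then show ?thesis unfolding value_bloch N px_def py_def pz_def n_def sx_def sy_def sz_def
      by (simp add: mult.commute)
  qed
  have "px\<^sup>2 \<le> 1" "pz\<^sup>2 \<le> 1" using unit zero_le_power2[of py] zero_le_power2[of pz]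
      zero_le_power2[of px] by linarith+
  then have px1: "px \<le> 1" "pz \<le> 1" using abs_square_le_1[of px] abs_square_le_1[of pz] by auto
  define r2 where "r2 = sqrt 2"
  define r3 where "r3 = sqrt 3"
  have r2p: "r2\<^sup>2 = 2" "r2 > 0" unfolding r2_def by simp_all
  have r3p: "r3\<^sup>2 = 3" "r3 > 0" unfolding r3_def by simp_all
  define D where "D = px + pz - 1"
  have conds: "n + sx = 2 \<and> sx = sz \<and> 0 \<le> sy \<and> sy \<le> sx \<and>
     ((in_PX (outer \<Psi> \<Psi>) \<or> in_PZ (outer \<Psi> \<Psi>)) \<longrightarrow> sy = sx)"
  proof (cases "D \<le> (2 + r3) * py")
    case True
    have S1: "px + py + pz > 1"
    proof (rule ccontr)
      assume "\<not> px + py + pz > 1"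
      then have "(px = 0 \<and> pz = 1) \<or> (pz = 0 \<and> px = 1)"
        using deg_real[of px py pz] P unit by simp
      then have "(blx a b = 0 \<and> blz a b = 1) \<or> (blz a b = 0 \<and> blx a b = 1)"
        unfolding px_def pz_def .
      then have "\<Psi> \<in> stab_states" unfolding Psi by (rule deg_stab[OF N])
      then show False using nonstab by simp
    qed
    define k where "k = (px + py + pz - 1) / (3 + r3)"
    have k1: "k * (3 + r3) = px + py + pz - 1" unfolding k_def using r3p by simp
    have kpos: "k > 0" unfolding k_def using S1 r3p by simp
    have kpy: "k \<le> py"
    proof -
      have "k * (3 + r3) \<le> py * (3 + r3)" using k1 True unfolding D_def by (simp add: algebra_simps)
      then show ?thesis using r3p by simp
    qed
    have w3: "omega_witness (ket 1 (Complex ((sqrt 3 - 1) / 2) ((sqrt 3 - 1) / 2)))" by (rule omega3_wit)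
    have v3: "(3 - r3) + (r3 - 1) * (px + py + pz) \<le> n + sx * px + sy * py + sz * pz"
      using val[OF w3] unfolding omega3 r3_def by (simp add: algebra_simps)
    have "(3 - r3) * (px + py + pz - 1) = (3 - r3) * (3 + r3) * k" unfolding k1[symmetric] by (simp add: algebra_simps)
    also have "\<dots> = 6 * k" using r3p by (simp add: algebra_simps power2_eq_square)
    finally have "(3 - r3) * (px + py + pz - 1) = 6 * k" .
    then have v3': "n + sx * px + sy * py + sz * pz \<ge> 2 * (px + py + pz - 3 * k)"
      using v3 by (simp add: algebra_simps)
    have c3: "sx = sy \<and> sy = sz \<and> n + sx = 2 \<and> sx \<ge> 0"
      by (rule cert3[OF r3p k1 kpos _ kpy _ sq n0 W(3) W(5) W(1) v3']) (use kpy P in linarith)+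
    then show ?thesis by auto
  next
    case False
    then have Dg: "D > (2 + r3) * py" by simp
    have Dpos: "D > 0"
    proof -
      have "(2 + r3) * py \<ge> 0" using P r3p by simp
      then show ?thesis using Dg by simp
    qed
    define R where "R = sqrt (D\<^sup>2 + py\<^sup>2)"
    have R2: "R\<^sup>2 = D\<^sup>2 + py\<^sup>2" unfolding R_def by simp
    have R0: "R \<ge> 0" unfolding R_def by simp
    have "D\<^sup>2 > 0" using Dpos by simp
    then have "D\<^sup>2 + py\<^sup>2 > 0" using zero_le_power2[of py] by linarith
    then have Rpos: "R > 0" unfolding R_def by simp
    have reg: "r2 * (D - py) \<ge> R"
    proof -
      have a: "D - 2 * py \<ge> r3 * py" using Dg by (simp add: algebra_simps)
      have "r3 * py \<ge> 0" using r3p P by simp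
      then have "(r3 * py)\<^sup>2 \<le> (D - 2 * py)\<^sup>2" using a by (simp add: power_mono)
      then have "3 * py\<^sup>2 \<le> (D - 2 * py)\<^sup>2" using r3p by (simp add: power_mult_distrib)
      then have "D\<^sup>2 + py\<^sup>2 \<le> (r2 * (D - py))\<^sup>2" using r2p
        by (simp add: power_mult_distrib power2_eq_square algebra_simps)
      then have "R \<le> sqrt ((r2 * (D - py))\<^sup>2)" unfolding R_def by (rule real_sqrt_le_mono)
      moreover have "r2 * (D - py) \<ge> 0"
      proof -
        have "D - py \<ge> 0" using a \<open>r3 * py \<ge> 0\<close> P by linarith
        then show ?thesis using r2p by simp
      qed
      ultimately show ?thesis by simp
    qed
    define c1 where "c1 = r2 * D / R"
    define c2 where "c2 = r2 * py / R"
    have c12: "c1 - c2 \<ge> 1" unfolding c1_def c2_def using reg Rpos by (simp add: field_simps)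
    have c20: "c2 \<ge> 0" unfolding c2_def using r2p P Rpos by simp
    have om2: "bln 1 (Complex (c1 - 1) c2) = 4 - 2 * c1" "blx 1 (Complex (c1 - 1) c2) = 2 * c1 - 2"
      "bly 1 (Complex (c1 - 1) c2) = 2 * c2" "blz 1 (Complex (c1 - 1) c2) = 2 * c1 - 2"
      unfolding c1_def c2_def using omega2[OF R2 Rpos r2p(1)] by simp_all
    have w2: "omega_witness (ket 1 (Complex (c1 - 1) c2))"
      unfolding witness_bloch om2 using c12 c20 by simp
    have cd: "c1 * D + c2 * py = r2 * R"
    proof -
      have "c1 * D + c2 * py = r2 * (D\<^sup>2 + py\<^sup>2) / R" unfolding c1_def c2_def using Rpos
        by (simp add: power2_eq_square field_simps)
      also have "\<dots> = r2 * R" unfolding R2[symmetric] using Rpos by (simp add: power2_eq_square)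
      finally show ?thesis .
    qed
    have "4 - 2 * c1 + (2 * c1 - 2) * px + 2 * c2 * py + (2 * c1 - 2) * pz \<le> n + sx * px + sy * py + sz * pz"
      using val[OF w2] unfolding om2 by (simp add: algebra_simps)
    moreover have "4 - 2 * c1 + (2 * c1 - 2) * px + 2 * c2 * py + (2 * c1 - 2) * pz = 2 * (1 - D + (c1 * D + c2 * py))"
      unfolding D_def by (simp add: algebra_simps)
    ultimately have v2: "n + sx * px + sy * py + sz * pz \<ge> 2 * (1 - D + r2 * R)" using cd by simp
    have c2r: "n + sx = 2 \<and> sx = sz \<and> 0 \<le> sy \<and> sy \<le> sx"
      by (rule cert2[OF r2p D_def R2 R0 Dpos P(2) reg px1 sq n0 W(3) W(1) v2])
    have "\<not> (in_PX (outer \<Psi> \<Psi>) \<or> in_PZ (outer \<Psi> \<Psi>))"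
    proof
      assume "in_PX (outer \<Psi> \<Psi>) \<or> in_PZ (outer \<Psi> \<Psi>)"
      then have "px = py \<or> pz = py" using P
        unfolding in_PX_def in_PZ_def Psi expX expY expZ px_def py_def pz_def by auto
      then have "D \<le> py" unfolding D_def using px1 by auto
      moreover have "py \<le> (2 + r3) * py" using P r3p by (simp add: algebra_simps)
      ultimately show False using Dg by simp
    qed
    then show ?thesis using c2r by simp
  qed
  show ?thesis
  proof
    show "\<exists>q::real. sqrt (2/3) \<le> q \<and> q \<le> 1 \<and>
           outer \<omega> \<omega> = (1 / (1 + q / sqrt 2)) *\<^sub>R
             (PauliI + (q / sqrt 2) *\<^sub>R (PauliX + PauliZ) + sqrt (1 - q\<^sup>2) *\<^sub>R PauliY)"
      unfolding Om using conds unfolding n_def sx_def sy_def sz_def by (intro final1) auto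
    show "(in_PX (outer \<Psi> \<Psi>) \<or> in_PZ (outer \<Psi> \<Psi>)) \<longrightarrow>
           outer \<omega> \<omega> = (1 / (1 + 1 / sqrt 3)) *\<^sub>R
             (PauliI + (1 / sqrt 3) *\<^sub>R (PauliX + PauliY + PauliZ))"
      unfolding Om using conds unfolding n_def sx_def sy_def sz_def by (auto intro: final2)
  qed
qed

end
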